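(* Fix a rooted tree $T$ on $t\ge2$ vertices and let $G$ be a connected graph with at least $2t$ vertices. Then any two pendant copies of $T$ in $G$ that share at least one vertex have the same root.
   Context: A pendant copy of the rooted tree $T$ in $G$ is a set $S$ of $t$ vertices of $G$ together with a bijection from the vertices of $T$ to $S$ such that two vertices of $S$ are adjacent in $G$ if and only if the corresponding vertices of $T$ are adjacent, and no vertex of $S$ other than the image of the root (called the root of the copy) has a neighbour outside $S$. Equivalently, $G$ is obtained by identifying the root of $T$ with a vertex of a graph $H$. *)

theory Defs
  imports Main
begin

definition simple_graph :: "'a set \<Rightarrow> ('a \<Rightarrow> 'a \<Rightarrow> bool) \<Rightarrow> bool" where
  "simple_graph V E \<longleftrightarrow> finite V \<and> (\<forall>u v. E u v \<longrightarrow> E v u) \<and> (\<forall>u. \<not> E u u)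
     \<and> (\<forall>u v. E u v \<longrightarrow> u \<in> V \<and> v \<in> V)"

definition is_walk :: "'a set \<Rightarrow> ('a \<Rightarrow> 'a \<Rightarrow> bool) \<Rightarrow> 'a list \<Rightarrow> bool" where
  "is_walk V E p \<longleftrightarrow> p \<noteq> [] \<and> set p \<subseteq> V \<and> (\<forall>i. Suc i < length p \<longrightarrow> E (p ! i) (p ! Suc i))"

definition connected_graph :: "'a set \<Rightarrow> ('a \<Rightarrow> 'a \<Rightarrow> bool) \<Rightarrow> bool" where
  "connected_graph V E \<longleftrightarrow> V \<noteq> {} \<and>
     (\<forall>u\<in>V. \<forall>v\<in>V. \<exists>p. is_walk V E p \<and> hd p = u \<and> last p = v)"

definition is_cycle :: "'a set \<Rightarrow> ('a \<Rightarrow> 'a \<Rightarrow> bool) \<Rightarrow> 'a list \<Rightarrow> bool" where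
  "is_cycle V E c \<longleftrightarrow> is_walk V E c \<and> length c \<ge> 3 \<and> distinct c \<and> E (last c) (hd c)"

definition is_tree :: "'a set \<Rightarrow> ('a \<Rightarrow> 'a \<Rightarrow> bool) \<Rightarrow> bool" where
  "is_tree V E \<longleftrightarrow> simple_graph V E \<and> connected_graph V E \<and> (\<nexists>c. is_cycle V E c)"

definition rooted_tree :: "'b set \<Rightarrow> ('b \<Rightarrow> 'b \<Rightarrow> bool) \<Rightarrow> 'b \<Rightarrow> bool" where
  "rooted_tree VT ET r \<longleftrightarrow> is_tree VT ET \<and> r \<in> VT"

text \<open>Its root is f r.\<close>
definition pendant_copy ::
  "'b set \<Rightarrow> ('b \<Rightarrow> 'b \<Rightarrow> bool) \<Rightarrow> 'b \<Rightarrow> 'a set \<Rightarrow> ('a \<Rightarrow> 'a \<Rightarrow> bool) \<Rightarrow> 'a set \<Rightarrow> ('b \<Rightarrow> 'a) \<Rightarrow> bool" where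
  "pendant_copy VT ET r V E S f \<longleftrightarrow>
     S \<subseteq> V \<and> bij_betw f VT S \<and>
     (\<forall>x\<in>VT. \<forall>y\<in>VT. E (f x) (f y) \<longleftrightarrow> ET x y) \<and>
     (\<forall>v\<in>S. v \<noteq> f r \<longrightarrow> (\<forall>w. E v w \<longrightarrow> w \<in> S))"

end

theory Submission
  imports Defs
begin

lemma walk_closed:
  assumes cl: "\<forall>v\<in>A. \<forall>w. E v w \<longrightarrow> w \<in> A \<or> w \<in> X"
    and adj: "\<forall>i. Suc i < length p \<longrightarrow> E (p!i) (p!Suc i)"
    and ne: "p \<noteq> []" and h: "hd p \<in> A" and dis: "set p \<inter> X = {}"
  shows "set p \<subseteq> A"
proof -
  have "\<forall>i. i < length p \<longrightarrow> p!i \<in> A"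
  proof
    fix i show "i < length p \<longrightarrow> p!i \<in> A"
    proof (induction i)
      case 0 then show ?case using h ne by (simp add: hd_conv_nth)
    next
      case (Suc i)
      show ?case
      proof
        assume l: "Suc i < length p"
        then have a: "p!i \<in> A" using Suc by simp
        have e: "E (p!i) (p!Suc i)" using adj l by blast
        have "p!Suc i \<notin> X" using dis l nth_mem by blast
        then show "p!Suc i \<in> A" using cl a e by blast
      qed
    qed
  qed
  then show ?thesis by (metis in_set_conv_nth subsetI)
qed

lemma copy_conn:
  assumes "rooted_tree VT ET r" "pendant_copy VT ET r V E S f" "u \<in> S" "v \<in> S"
  shows "\<exists>p. p \<noteq> [] \<and> set p \<subseteq> S \<and> hd p = u \<and> last p = v \<and>
     (\<forall>i. Suc i < length p \<longrightarrow> E (p!i) (p!Suc i))"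
proof -
  have bij: "bij_betw f VT S" and iso: "\<forall>x\<in>VT. \<forall>y\<in>VT. E (f x) (f y) \<longleftrightarrow> ET x y"
    using assms(2) unfolding pendant_copy_def by auto
  obtain a b where a: "a \<in> VT" "u = f a" and b: "b \<in> VT" "v = f b"
    using bij assms(3,4) unfolding bij_betw_def by blast
  have "connected_graph VT ET" using assms(1) unfolding rooted_tree_def is_tree_def by auto
  then obtain q where q: "is_walk VT ET q" "hd q = a" "last q = b"
    using a b unfolding connected_graph_def by blast
  have qs: "set q \<subseteq> VT" "q \<noteq> []" using q unfolding is_walk_def by auto
  show ?thesis
  proof (intro exI conjI allI impI)
    show "map f q \<noteq> []" using qs by simp
    show "set (map f q) \<subseteq> S" using qs bij unfolding bij_betw_def by auto
    show "hd (map f q) = u" using qs q a by (simp add: hd_map)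
    show "last (map f q) = v" using qs q b by (simp add: last_map)
    fix i assume l: "Suc i < length (map f q)"
    then have "ET (q!i) (q!Suc i)" using q(1) unfolding is_walk_def by auto
    moreover have "q!i \<in> VT" "q!Suc i \<in> VT" using l qs(1) nth_mem by fastforce+
    ultimately show "E (map f q ! i) (map f q ! Suc i)" using iso l by simp
  qed
qed

lemma one_side:
  assumes rt: "rooted_tree VT ET r" and fin: "finite V"
    and P1: "pendant_copy VT ET r V E S1 f1"
    and P2: "pendant_copy VT ET r V E S2 f2"
    and ni: "f1 r \<notin> S2" and int: "S1 \<inter> S2 \<noteq> {}"
  shows False
proof -
  have rV: "r \<in> VT" using rt unfolding rooted_tree_def by auto
  have S1V: "S1 \<subseteq> V" and b1: "bij_betw f1 VT S1"
    and cl1: "\<forall>v\<in>S1. v \<noteq> f1 r \<longrightarrow> (\<forall>w. E v w \<longrightarrow> w \<in> S1)"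
    using P1 unfolding pendant_copy_def by auto
  have S2V: "S2 \<subseteq> V" and b2: "bij_betw f2 VT S2"
    using P2 unfolding pendant_copy_def by auto
  obtain x where x: "x \<in> S1" "x \<in> S2" using int by blast
  have xr: "x \<noteq> f1 r" using x ni by blast
  have sub: "S2 \<subseteq> S1 - {f1 r}"
  proof
    fix v assume v: "v \<in> S2"
    obtain p where p: "p \<noteq> []" "set p \<subseteq> S2" "hd p = x" "last p = v"
      "\<forall>i. Suc i < length p \<longrightarrow> E (p!i) (p!Suc i)"
      using copy_conn[OF rt P2 x(2) v] by blast
    have "set p \<subseteq> S1 - {f1 r}"
      apply (rule walk_closed[where X="{f1 r}" and E=E])
      using cl1 p x xr ni by auto
    moreover have "last p \<in> set p" using p(1) by simp
    ultimately show "v \<in> S1 - {f1 r}" using p(4) by blast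
  qed
  have f1: "finite S1" using S1V fin finite_subset by blast
  have "card S2 \<le> card (S1 - {f1 r})" using card_mono[OF _ sub] f1 by blast
  moreover have "card S2 = card VT" using b2 bij_betw_same_card by metis
  moreover have "card S1 = card VT" using b1 bij_betw_same_card by metis
  moreover have "f1 r \<in> S1" using b1 rV unfolding bij_betw_def by blast
  moreover have "card S1 > 0" using f1 calculation(4) card_gt_0_iff by blast
  ultimately show False using f1 by simp
qed

theorem lemma2p3:
  fixes VT :: "'b set" and ET :: "'b \<Rightarrow> 'b \<Rightarrow> bool" and r :: 'b
    and V :: "'a set" and E :: "'a \<Rightarrow> 'a \<Rightarrow> bool"
    and S1 S2 :: "'a set" and f1 f2 :: "'b \<Rightarrow> 'a"
  assumes "rooted_tree VT ET r"
    and "card VT \<ge> 2"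
    and "simple_graph V E" and "connected_graph V E"
    and "card V \<ge> 2 * card VT"
    and "pendant_copy VT ET r V E S1 f1"
    and "pendant_copy VT ET r V E S2 f2"
    and "S1 \<inter> S2 \<noteq> {}"
  shows "f1 r = f2 r"
proof (rule ccontr)
  assume ne: "f1 r \<noteq> f2 r"
  have fin: "finite V" using assms(3) unfolding simple_graph_def by auto
  have in1: "f1 r \<in> S2" using one_side[OF assms(1) fin assms(6) assms(7)] assms(8) by blast
  have in2: "f2 r \<in> S1" using one_side[OF assms(1) fin assms(7) assms(6)] assms(8) by blast
  have S1V: "S1 \<subseteq> V" and b1: "bij_betw f1 VT S1"
    and cl1: "\<forall>v\<in>S1. v \<noteq> f1 r \<longrightarrow> (\<forall>w. E v w \<longrightarrow> w \<in> S1)"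
    using assms(6) unfolding pendant_copy_def by auto
  have S2V: "S2 \<subseteq> V" and b2: "bij_betw f2 VT S2"
    and cl2: "\<forall>v\<in>S2. v \<noteq> f2 r \<longrightarrow> (\<forall>w. E v w \<longrightarrow> w \<in> S2)"
    using assms(7) unfolding pendant_copy_def by auto
  have cl: "\<forall>v\<in>S1 \<union> S2. \<forall>w. E v w \<longrightarrow> w \<in> S1 \<union> S2 \<or> w \<in> {}"
  proof (intro ballI allI impI)
    fix v w assume v: "v \<in> S1 \<union> S2" and e: "E v w"
    show "w \<in> S1 \<union> S2 \<or> w \<in> {}"
    proof (cases "v = f1 r")
      case True then show ?thesis using cl2 in1 ne e by blast
    next
      case False
      show ?thesis
      proof (cases "v \<in> S1")
        case True then show ?thesis using cl1 False e by blast
      next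
        case F2: False
        then have "v \<in> S2" "v \<noteq> f2 r" using v in2 by auto
        then show ?thesis using cl2 e by blast
      qed
    qed
  qed
  obtain x where x: "x \<in> S1" "x \<in> S2" using assms(8) by blast
  have VS: "V \<subseteq> S1 \<union> S2"
  proof
    fix v assume v: "v \<in> V"
    have "x \<in> V" using x S1V by blast
    then obtain p where p: "is_walk V E p" "hd p = x" "last p = v"
      using assms(4) v unfolding connected_graph_def by blast
    have "set p \<subseteq> S1 \<union> S2"
      apply (rule walk_closed[OF cl])
      using p x unfolding is_walk_def by auto
    moreover have "last p \<in> set p" using p(1) unfolding is_walk_def by simp
    ultimately show "v \<in> S1 \<union> S2" using p(3) by blast
  qed
  have f1: "finite S1" "finite S2" using S1V S2V fin finite_subset by blast+
  have "card V \<le> card (S1 \<union> S2)" using card_mono[OF _ VS] f1 by simp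
  moreover have "card S1 + card S2 = card (S1 \<union> S2) + card (S1 \<inter> S2)"
    using card_Un_Int f1 by blast
  moreover have "card (S1 \<inter> S2) > 0" using f1 assms(8) by auto
  moreover have "card S2 = card VT" using b2 bij_betw_same_card by metis
  moreover have "card S1 = card VT" using b1 bij_betw_same_card by metis
  ultimately show False using assms(5) by linarith
qed

end
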